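(* Let $n\geq 2$ be an integer and let $m\neq\pm1$ be a square-free integer. Let $\sqrt[n]{m}$ denote a root of $X^n-m$. Then every algebraic integer in $\mathbb{Q}(\sqrt[n]{m})$ can be written in the basis $(1,\sqrt[n]{m},\ldots,\sqrt[n]{m^{n-1}})$ with rational coefficients having a denominator $d$ satisfying $\gcd(d,m)=1$.
   Context: Here $\sqrt[n]{m^{j}}$ means $(\sqrt[n]{m})^{j}$. Since $m$ is square-free and $m\neq\pm1$, $X^n-m$ is irreducible over $\mathbb{Q}$, so $(1,\sqrt[n]{m},\ldots,\sqrt[n]{m^{n-1}})$ is a $\mathbb{Q}$-basis of $\mathbb{Q}(\sqrt[n]{m})$. *)

theory Defs
  imports Complex_Main "HOL-Computational_Algebra.Computational_Algebra"
begin

text \<open>The field \<open>\<rat>(a)\<close> inside \<open>\<complex>\<close>: the smallest subfield of \<open>\<complex>\<close> containing \<open>a\<close>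
  (every subfield contains \<open>\<rat>\<close>).\<close>
definition subfield_complex :: "complex set \<Rightarrow> bool" where
  "subfield_complex K \<longleftrightarrow> 0 \<in> K \<and> 1 \<in> K \<and>
     (\<forall>x\<in>K. \<forall>y\<in>K. x + y \<in> K \<and> x - y \<in> K \<and> x * y \<in> K) \<and>
     (\<forall>x\<in>K. x \<noteq> 0 \<longrightarrow> inverse x \<in> K)"

definition rat_adjoin :: "complex \<Rightarrow> complex set" where
  "rat_adjoin a = \<Inter> {K. subfield_complex K \<and> a \<in> K}"

end

theory Submission
  imports Defs "HOL-Computational_Algebra.Field_as_Ring" "Jordan_Normal_Form.Char_Poly"
begin
lemma key_alg_int:
  fixes gs :: "complex list" and u :: complex
  assumes one: "1 \<in> set gs"
    and cl: "\<And>i. i < length gs \<Longrightarrow> \<exists>c::nat \<Rightarrow> int. u * gs!i = (\<Sum>l<length gs. of_int (c l) * gs!l)"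
  shows "algebraic_int u"
proof -
  define k where "k = length gs"
  from cl obtain c where c: "\<And>i. i < k \<Longrightarrow> u * gs!i = (\<Sum>l<k. of_int (c i l) * gs!l)"
    unfolding k_def by metis
  define A :: "int mat" where "A = mat k k (\<lambda>(i,l). c i l)"
  define v :: "complex vec" where "v = vec k (\<lambda>i. gs!i)"
  have A: "A \<in> carrier_mat k k" unfolding A_def by auto
  have A': "map_mat of_int A \<in> carrier_mat k k" using A by auto
  have "map_mat of_int A *\<^sub>v v = u \<cdot>\<^sub>v v"
  proof (rule eq_vecI)
    fix i assume "i < dim_vec (u \<cdot>\<^sub>v v)"
    hence i: "i < k" unfolding v_def by auto
    have "(map_mat of_int A *\<^sub>v v) $ i = (\<Sum>l<k. of_int (c i l) * gs!l)"
      using i unfolding A_def v_def by (auto simp: mult_mat_vec_def scalar_prod_def intro!: sum.cong)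
    also have "\<dots> = (u \<cdot>\<^sub>v v) $ i" using c[OF i] i unfolding v_def by auto
    finally show "(map_mat of_int A *\<^sub>v v) $ i = (u \<cdot>\<^sub>v v) $ i" .
  qed (auto simp: A_def v_def)
  moreover have "v \<noteq> 0\<^sub>v k"
  proof
    assume "v = 0\<^sub>v k"
    from one obtain i where "i < k" "gs!i = 1" unfolding k_def by (metis in_set_conv_nth)
    with \<open>v = 0\<^sub>v k\<close> show False unfolding v_def by (metis index_vec index_zero_vec(1) one_neq_zero)
  qed
  ultimately have "eigenvalue (map_mat of_int A) u"
    unfolding eigenvalue_def eigenvector_def using A' by (intro exI[of _ v]) (auto simp: v_def)
  hence "poly (char_poly (map_mat of_int A)) u = 0"
    using eigenvalue_root_char_poly[OF A'] by auto
  hence "poly (map_poly of_int (char_poly A)) u = 0"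
    using of_int_hom.char_poly_hom[OF A] by metis
  moreover have "lead_coeff (char_poly A) = 1" using degree_monic_char_poly[OF A] by simp
  ultimately show ?thesis using algebraic_int_altdef_ipoly by blast
qed

definition zspan :: "complex list \<Rightarrow> complex set" where
  "zspan gs = {y. \<exists>c::nat \<Rightarrow> int. y = (\<Sum>l<length gs. of_int (c l) * gs!l)}"

lemma zspan_0: "0 \<in> zspan gs"
  unfolding zspan_def by (rule CollectI, rule exI[of _ "\<lambda>_. 0"]) simp

lemma zspan_add: "y1 \<in> zspan gs \<Longrightarrow> y2 \<in> zspan gs \<Longrightarrow> y1 + y2 \<in> zspan gs"
proof -
  assume "y1 \<in> zspan gs" "y2 \<in> zspan gs"
  then obtain c1 c2 where "y1 = (\<Sum>l<length gs. of_int (c1 l) * gs!l)"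
    "y2 = (\<Sum>l<length gs. of_int (c2 l) * gs!l)" unfolding zspan_def by blast
  hence "y1 + y2 = (\<Sum>l<length gs. of_int (c1 l + c2 l) * gs!l)"
    by (simp add: sum.distrib distrib_right)
  thus ?thesis unfolding zspan_def by (intro CollectI exI[of _ "\<lambda>l. c1 l + c2 l"]) simp
qed

lemma zspan_scale: "y \<in> zspan gs \<Longrightarrow> of_int k * y \<in> zspan gs"
proof -
  assume "y \<in> zspan gs"
  then obtain c where "y = (\<Sum>l<length gs. of_int (c l) * gs!l)" unfolding zspan_def by blast
  hence "of_int k * y = (\<Sum>l<length gs. of_int (k * c l) * gs!l)"
    by (simp add: sum_distrib_left mult.assoc)
  thus ?thesis unfolding zspan_def by (intro CollectI exI[of _ "\<lambda>l. k * c l"]) simp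
qed

lemma zspan_diff: "y1 \<in> zspan gs \<Longrightarrow> y2 \<in> zspan gs \<Longrightarrow> y1 - y2 \<in> zspan gs"
  using zspan_add[of y1 gs "of_int (-1) * y2"] zspan_scale[of y2 gs "-1"] by simp

lemma zspan_gen: "g \<in> set gs \<Longrightarrow> g \<in> zspan gs"
proof -
  assume "g \<in> set gs"
  then obtain i where i: "i < length gs" "gs!i = g" by (metis in_set_conv_nth)
  have "(\<Sum>l<length gs. of_int (if l = i then 1 else 0) * gs!l) = (\<Sum>l<length gs. if l = i then gs!l else 0)"
    by (rule sum.cong) auto
  also have "\<dots> = g" using i by (simp add: sum.delta')
  finally have "g = (\<Sum>l<length gs. of_int (if l = i then 1 else 0) * gs!l)" by simp
  thus ?thesis unfolding zspan_def by (intro CollectI exI[of _ "\<lambda>l. if l = i then 1 else 0"])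
qed

lemma zspan_sum: "finite A \<Longrightarrow> (\<And>i. i \<in> A \<Longrightarrow> f i \<in> zspan gs) \<Longrightarrow> sum f A \<in> zspan gs"
  by (induction A rule: finite_induct) (auto intro: zspan_0 zspan_add)

definition good :: "complex list \<Rightarrow> complex \<Rightarrow> bool" where
  "good gs w \<longleftrightarrow> (\<forall>y\<in>zspan gs. w * y \<in> zspan gs)"

lemma good_of_gens:
  assumes "\<And>g. g \<in> set gs \<Longrightarrow> w * g \<in> zspan gs"
  shows "good gs w"
  unfolding good_def
proof
  fix y assume "y \<in> zspan gs"
  then obtain c where "y = (\<Sum>l<length gs. of_int (c l) * gs!l)" unfolding zspan_def by blast
  hence "w * y = (\<Sum>l<length gs. of_int (c l) * (w * gs!l))"
    by (simp add: sum_distrib_left algebra_simps)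
  also have "\<dots> \<in> zspan gs"
    by (intro zspan_sum zspan_scale assms) auto
  finally show "w * y \<in> zspan gs" .
qed

lemma good_int: "good gs (of_int k)"
  unfolding good_def using zspan_scale by blast
lemma good_add: "good gs a \<Longrightarrow> good gs b \<Longrightarrow> good gs (a + b)"
  unfolding good_def by (simp add: distrib_right zspan_add)
lemma good_diff: "good gs a \<Longrightarrow> good gs b \<Longrightarrow> good gs (a - b)"
  unfolding good_def by (simp add: left_diff_distrib zspan_diff)
lemma good_mult: "good gs a \<Longrightarrow> good gs b \<Longrightarrow> good gs (a * b)"
  unfolding good_def by (simp add: mult.assoc)
lemma good_power: "good gs a \<Longrightarrow> good gs (a ^ k)"
  by (induction k) (auto intro: good_mult simp: good_int[of gs 1, simplified])
lemma good_sum: "finite A \<Longrightarrow> (\<And>i. i \<in> A \<Longrightarrow> good gs (f i)) \<Longrightarrow> good gs (sum f A)"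
  by (induction A rule: finite_induct) (auto intro: good_add simp: good_int[of gs 0, simplified])

lemma good_alg_int: "1 \<in> set gs \<Longrightarrow> good gs w \<Longrightarrow> algebraic_int w"
proof (rule key_alg_int)
  fix i assume "good gs w" "i < length gs"
  hence "w * gs!i \<in> zspan gs" unfolding good_def using zspan_gen nth_mem by blast
  thus "\<exists>c::nat \<Rightarrow> int. w * gs!i = (\<Sum>l<length gs. of_int (c l) * gs!l)"
    unfolding zspan_def by blast
qed

lemma gens_exist:
  fixes x \<alpha> :: complex and m :: int
  assumes "algebraic_int x" "\<alpha> ^ n = of_int m" "n \<ge> 1"
  shows "\<exists>gs. 1 \<in> set gs \<and> good gs x \<and> good gs \<alpha>"
proof -
  obtain q where q: "poly (map_poly of_int q) x = 0" "lead_coeff q = 1"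
    using assms(1) algebraic_int_altdef_ipoly by blast
  define D where "D = degree q"
  have "D \<noteq> 0"
  proof
    assume "D = 0"
    hence "q = 1" using q(2) unfolding D_def by (metis monic_degree_0)
    thus False using q(1) by simp
  qed
  have "0 = (\<Sum>i\<le>D. of_int (coeff q i) * x ^ i)"
    using q(1) unfolding D_def by (simp add: poly_altdef)
  also have "\<dots> = (\<Sum>i<D. of_int (coeff q i) * x ^ i) + x ^ D"
    using q(2) \<open>D \<noteq> 0\<close> unfolding D_def by (simp add: lessThan_Suc_atMost[symmetric])
  finally have xD: "x ^ D = (\<Sum>i<D. of_int (- coeff q i) * x ^ i)"
    by (simp add: sum_negf eq_neg_iff_add_eq_0 add.commute)
  define gs where "gs = [x ^ a * \<alpha> ^ b. a <- [0..<D], b <- [0..<n]]"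
  have sgs: "set gs = {x ^ a * \<alpha> ^ b | a b. a < D \<and> b < n}"
    unfolding gs_def by (auto; force)
  have "1 \<in> set gs" unfolding sgs using \<open>D \<noteq> 0\<close> assms(3)
    by (auto intro!: exI[of _ 0])
  moreover have "good gs x"
  proof (rule good_of_gens)
    fix g assume "g \<in> set gs"
    then obtain a b where ab: "g = x ^ a * \<alpha> ^ b" "a < D" "b < n" unfolding sgs by blast
    show "x * g \<in> zspan gs"
    proof (cases "Suc a < D")
      case True
      have "x * g = x ^ Suc a * \<alpha> ^ b" using ab by simp
      hence "x * g \<in> set gs" unfolding sgs using True ab(3) by blast
      thus ?thesis by (rule zspan_gen)
    next
      case False
      hence "Suc a = D" using ab by auto
      hence "x * g = x ^ D * \<alpha> ^ b" using ab by (metis mult.assoc power_Suc)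
      also have "\<dots> = (\<Sum>i<D. of_int (- coeff q i) * (x ^ i * \<alpha> ^ b))"
        unfolding xD by (simp add: sum_distrib_right mult.assoc)
      also have "\<dots> \<in> zspan gs"
        by (intro zspan_sum zspan_scale zspan_gen) (use ab in \<open>auto simp: sgs\<close>)
      finally show ?thesis .
    qed
  qed
  moreover have "good gs \<alpha>"
  proof (rule good_of_gens)
    fix g assume "g \<in> set gs"
    then obtain a b where ab: "g = x ^ a * \<alpha> ^ b" "a < D" "b < n" unfolding sgs by blast
    show "\<alpha> * g \<in> zspan gs"
    proof (cases "Suc b < n")
      case True
      have "\<alpha> * g = x ^ a * \<alpha> ^ Suc b" using ab by simp
      hence "\<alpha> * g \<in> set gs" unfolding sgs using True ab(2) by blast
      thus ?thesis by (rule zspan_gen)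
    next
      case False
      hence "Suc b = n" using ab by auto
      hence calc: "\<alpha> * g = of_int m * (x ^ a * \<alpha> ^ 0)" using ab assms(2)
        by (metis mult.left_commute mult.right_neutral power.simps(1) power_Suc)
      have "x ^ a * \<alpha> ^ 0 \<in> set gs" unfolding sgs using ab(2) assms(3)
        by (intro CollectI exI[of _ a] exI[of _ 0]) auto
      hence "of_int m * (x ^ a * \<alpha> ^ 0) \<in> zspan gs" by (intro zspan_scale zspan_gen)
      thus ?thesis using calc by simp
    qed
  qed
  ultimately show ?thesis by blast
qed
definition E :: "complex \<Rightarrow> rat poly \<Rightarrow> complex" where
  "E a p = poly (map_poly of_rat p) a"

lemma E_add: "E a (p + q) = E a p + E a q"
  and E_diff: "E a (p - q) = E a p - E a q"
  and E_mult: "E a (p * q) = E a p * E a q"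
  and E_const: "E a [:c:] = of_rat c"
  and E_X: "E a [:0,1:] = a"
proof -
  interpret mp: map_poly_comm_ring_hom "of_rat :: rat \<Rightarrow> complex" ..
  have "map_poly (of_rat :: rat \<Rightarrow> complex) [:c:] = [:of_rat c:]"
    by (cases "c = 0") (simp_all add: map_poly_pCons)
  thus "E a [:c:] = of_rat c" by (simp add: E_def)
  show "E a (p + q) = E a p + E a q" "E a (p - q) = E a p - E a q"
    "E a (p * q) = E a p * E a q" "E a [:0,1:] = a"
    by (simp_all add: E_def mp.hom_add mp.hom_minus mp.hom_mult map_poly_pCons[where f="of_rat :: rat \<Rightarrow> complex"])
qed

lemma E_unit_nz: "is_unit p \<Longrightarrow> E a p \<noteq> 0"
proof
  assume "is_unit p" "E a p = 0"
  then obtain c where "p = [:c:]" "is_unit c" using is_unit_poly_iff[of p] by blast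
  hence "c \<noteq> 0" by auto
  with \<open>E a p = 0\<close> \<open>p = [:c:]\<close> show False using E_const[of a c] by simp
qed

lemma root_prime_factor:
  fixes Q :: "rat poly"
  assumes "Q \<noteq> 0" "E a Q = 0"
  shows "\<exists>f. prime f \<and> f dvd Q \<and> E a f = 0"
  using assms
proof (induction "degree Q" arbitrary: Q rule: less_induct)
  case less
  have "\<not> is_unit Q" using less.prems E_unit_nz by blast
  then obtain b where b: "b dvd Q" "prime b" using prime_divisor_exists less.prems(1) by blast
  then obtain r where r: "Q = b * r" by (auto elim: dvdE)
  show ?case
  proof (cases "E a b = 0")
    case True thus ?thesis using b by blast
  next
    case False
    hence "E a r = 0" using less.prems r E_mult by (metis mult_eq_0_iff)
    have "r \<noteq> 0" "b \<noteq> 0" using r less.prems by auto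
    have "degree b > 0" using b(2) \<open>b \<noteq> 0\<close>
      by (metis gr0I is_unit_iff_degree not_prime_unit)
    hence "degree r < degree Q" using r \<open>r \<noteq> 0\<close> \<open>b \<noteq> 0\<close> by (simp add: degree_mult_eq)
    from less.hyps[OF this \<open>r \<noteq> 0\<close> \<open>E a r = 0\<close>] obtain f where
      "prime f" "f dvd r" "E a f = 0" by blast
    thus ?thesis using r by auto
  qed
qed

lemma E_inverse:
  fixes P :: "rat poly"
  assumes "P \<noteq> 0" "E a P = 0" "E a p \<noteq> 0"
  shows "\<exists>v. E a v * E a p = 1"
proof -
  obtain f where f: "prime f" "f dvd P" "E a f = 0" using root_prime_factor assms by blast
  have "\<not> f dvd p" using f assms(3) by (metis E_mult dvdE mult_zero_left)
  hence "coprime f p" using prime_elem_imp_coprime f(1) by blast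
  hence "gcd f p = 1" by simp
  hence "fst (bezout_coefficients f p) * f + snd (bezout_coefficients f p) * p = 1"
    using bezout_coefficients_fst_snd by metis
  hence "E a (fst (bezout_coefficients f p) * f + snd (bezout_coefficients f p) * p) = 1"
    using E_const[of a 1] by (simp add: one_pCons)
  thus ?thesis using f(3) by (auto simp: E_add E_mult)
qed

lemma reduce:
  fixes x \<alpha> :: complex and m d p :: int and c :: "nat \<Rightarrow> int"
  assumes n: "n \<ge> 1" and sf: "squarefree m" and al: "\<alpha> ^ n = of_int m"
    and ai: "algebraic_int x" and d: "d > 0"
    and x: "x = (\<Sum>i<n. (of_int (c i) / of_int d) * \<alpha> ^ i)"
    and p: "prime p" "p dvd d" "p dvd m"
  shows "\<forall>i<n. p dvd c i"
proof (rule ccontr)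
  assume "\<not> (\<forall>i<n. p dvd c i)"
  hence ex: "\<exists>i. i < n \<and> \<not> p dvd c i" by blast
  define j where "j = (LEAST i. i < n \<and> \<not> p dvd c i)"
  have j: "j < n" "\<not> p dvd c j" using LeastI_ex[OF ex] unfolding j_def by auto
  have jmin: "p dvd c i" if "i < j" for i
    using not_less_Least[of i "\<lambda>i. i < n \<and> \<not> p dvd c i"] that j(1) unfolding j_def by auto
  obtain gs where gs: "1 \<in> set gs" "good gs x" "good gs \<alpha>" using gens_exist[OF ai al n] by blast
  have p0: "p \<noteq> 0" using p(1) by auto
  obtain d' where d': "d = p * d'" using p(2) by (auto elim: dvdE)
  obtain m' where m': "m = p * m'" using p(3) by (auto elim: dvdE)
  define T where "T i = of_int (c i) / of_int p * \<alpha> ^ (i + (n - 1 - j))" for i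
  have "of_int d' * x = (\<Sum>i<n. (of_int (c i) / of_int p) * \<alpha> ^ i)"
    unfolding x sum_distrib_left using p0 d' d
    by (intro sum.cong) (auto simp: field_simps)
  hence "of_int d' * x * \<alpha> ^ (n - 1 - j) = (\<Sum>i<n. T i)"
    unfolding T_def by (simp add: sum_distrib_right power_add mult.assoc)
  hence g1: "good gs (\<Sum>i<n. T i)"
    by (metis gs(2,3) good_int good_mult good_power)
  have g2: "good gs (\<Sum>i\<in>{..<n} - {j}. T i)"
  proof (rule good_sum)
    fix i assume i: "i \<in> {..<n} - {j}"
    show "good gs (T i)"
    proof (cases "i < j")
      case True
      then obtain k where "c i = p * k" using jmin by (auto elim: dvdE)
      hence "T i = of_int k * \<alpha> ^ (i + (n - 1 - j))" unfolding T_def using p0 by simp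
      thus ?thesis by (metis gs(3) good_int good_mult good_power)
    next
      case False
      hence "i > j" using i by auto
      hence "i + (n - 1 - j) = n + (i - 1 - j)" using i j by auto
      hence "\<alpha> ^ (i + (n - 1 - j)) = of_int m * \<alpha> ^ (i - 1 - j)" by (simp add: power_add al)
      hence "T i = of_int (c i * m') * \<alpha> ^ (i - 1 - j)" unfolding T_def m' using p0 by simp
      thus ?thesis by (metis gs(3) good_int good_mult good_power)
    qed
  qed auto
  have "(\<Sum>i<n. T i) = T j + (\<Sum>i\<in>{..<n} - {j}. T i)"
    using j(1) by (simp add: sum.remove)
  hence "good gs (T j)" using good_diff[OF g1 g2] by (metis add_diff_cancel_right')
  hence "good gs (T j ^ n)" by (rule good_power)
  hence aiz: "algebraic_int (T j ^ n)" using good_alg_int gs(1) by blast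
  have "T j ^ n = (of_int (c j) / of_int p) ^ n * (\<alpha> ^ n) ^ (n - 1)"
  proof -
    have "T j = (of_int (c j) / of_int p) * \<alpha> ^ (n - 1)" unfolding T_def using j(1) by simp
    hence "T j ^ n = (of_int (c j) / of_int p) ^ n * (\<alpha> ^ (n - 1)) ^ n" by (simp only: power_mult_distrib)
    also have "(\<alpha> ^ (n - 1)) ^ n = (\<alpha> ^ n) ^ (n - 1)" by (metis power_mult mult.commute)
    finally show ?thesis .
  qed
  also have "\<dots> = of_int (c j ^ n * m ^ (n - 1)) / of_int (p ^ n)"
    by (simp add: al power_divide)
  finally have Tj: "T j ^ n = of_int (c j ^ n * m ^ (n - 1)) / of_int (p ^ n)" .
  hence "T j ^ n \<in> \<rat>" by simp
  hence "T j ^ n \<in> \<int>" using rational_algebraic_int_is_int aiz by blast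
  then obtain k where "T j ^ n = of_int k" by (elim Ints_cases)
  hence "(of_int (c j ^ n * m ^ (n - 1)) :: complex) = of_int (k * p ^ n)"
    using Tj p0 by (simp add: field_simps)
  hence "c j ^ n * m ^ (n - 1) = k * p ^ n" by (simp only: of_int_eq_iff)
  hence "p ^ (n - 1) * (c j ^ n * m' ^ (n - 1)) = p ^ (n - 1) * (k * p)"
    unfolding m' using n by (simp add: power_mult_distrib algebra_simps power_Suc[symmetric] del: power_Suc)
  hence "c j ^ n * m' ^ (n - 1) = k * p" using p0 by simp
  hence "p dvd c j ^ n * m' ^ (n - 1)" by simp
  hence "p dvd c j ^ n \<or> p dvd m' ^ (n - 1)" using p(1) prime_dvd_mult_iff by blast
  hence "p dvd c j \<or> p dvd m'" using p(1) prime_dvd_power by blast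
  moreover have "\<not> p dvd m'"
  proof
    assume "p dvd m'"
    hence "p ^ 2 dvd m" unfolding m' by (simp add: power2_eq_square)
    hence "is_unit p" using sf unfolding squarefree_def by blast
    thus False using p(1) not_prime_unit by blast
  qed
  ultimately show False using j(2) by blast
qed

lemma rep_rat:
  fixes \<alpha> x :: complex and m :: int
  assumes n: "n \<ge> 1" and al: "\<alpha> ^ n = of_int m" and x: "x \<in> rat_adjoin \<alpha>"
  shows "\<exists>q :: nat \<Rightarrow> rat. x = (\<Sum>i<n. of_rat (q i) * \<alpha> ^ i)"
proof -
  define P :: "rat poly" where "P = monom 1 n - [:of_int m:]"
  have "map_poly (of_rat :: rat \<Rightarrow> complex) (monom 1 n) = monom 1 n"
    by (simp add: map_poly_monom)
  hence "E \<alpha> (monom 1 n) = \<alpha> ^ n" by (simp add: E_def poly_monom)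
  hence EP: "E \<alpha> P = 0" unfolding P_def by (simp add: E_diff E_const al)
  have cP: "coeff P n = 1" using n by (cases n) (auto simp: P_def)
  hence P0: "P \<noteq> 0" by auto
  have dP: "degree P = n"
  proof (rule antisym)
    show "degree P \<le> n" unfolding P_def
      by (rule order.trans[OF degree_diff_le]) (auto simp: degree_monom_le)
    show "n \<le> degree P" using cP by (intro le_degree) simp
  qed
  define S where "S = range (E \<alpha>)"
  have E0: "E \<alpha> 0 = 0" and E1: "E \<alpha> 1 = 1" by (simp_all add: E_def)
  have "subfield_complex S"
    unfolding subfield_complex_def S_def
  proof (intro conjI ballI impI)
    show "0 \<in> range (E \<alpha>)" using E0 by (metis rangeI)
    show "1 \<in> range (E \<alpha>)" using E1 by (metis rangeI)
    fix a b assume "a \<in> range (E \<alpha>)" "b \<in> range (E \<alpha>)"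
    then obtain p1 p2 where "a = E \<alpha> p1" "b = E \<alpha> p2" by blast
    thus "a + b \<in> range (E \<alpha>)" "a - b \<in> range (E \<alpha>)" "a * b \<in> range (E \<alpha>)"
      by (metis E_add rangeI, metis E_diff rangeI, metis E_mult rangeI)
  next
    fix a assume "a \<in> range (E \<alpha>)" "a \<noteq> 0"
    then obtain p1 where p1: "a = E \<alpha> p1" by blast
    then obtain v where "E \<alpha> v * a = 1" using E_inverse[OF P0 EP] \<open>a \<noteq> 0\<close> by blast
    hence "inverse a = E \<alpha> v" by (metis inverse_unique mult.commute)
    thus "inverse a \<in> range (E \<alpha>)" by simp
  qed
  moreover have "\<alpha> \<in> S" unfolding S_def by (metis E_X rangeI)
  ultimately have "x \<in> S" using x unfolding rat_adjoin_def by blast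
  then obtain p where p: "x = E \<alpha> p" unfolding S_def by blast
  define r where "r = p mod P"
  have "E \<alpha> p = E \<alpha> (p div P * P + r)" unfolding r_def by simp
  also have "\<dots> = E \<alpha> r" by (simp add: E_add E_mult EP)
  finally have xr: "x = E \<alpha> r" using p by simp
  show ?thesis
  proof (cases "r = 0")
    case True
    thus ?thesis using xr E0 by (intro exI[of _ "\<lambda>_. 0"]) simp
  next
    case False
    hence dr: "degree r < n" using degree_mod_less'[OF P0, of p] dP unfolding r_def by simp
    have "x = (\<Sum>i\<le>degree r. of_rat (coeff r i) * \<alpha> ^ i)"
      unfolding xr E_def by (simp add: poly_altdef coeff_map_poly)
    also have "\<dots> = (\<Sum>i<n. of_rat (coeff r i) * \<alpha> ^ i)"
      using dr by (intro sum.mono_neutral_left) (auto simp: coeff_eq_0)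
    finally show ?thesis by blast
  qed
qed

lemma common_den:
  fixes \<alpha> :: complex and q :: "nat \<Rightarrow> rat"
  shows "\<exists>d c. d > 0 \<and> (\<Sum>i<n. of_rat (q i) * \<alpha> ^ i) = (\<Sum>i<n. (of_int (c i) / of_int d) * \<alpha> ^ i)"
proof -
  define den where "den i = snd (quotient_of (q i))" for i
  define num where "num i = fst (quotient_of (q i))" for i
  define d where "d = (\<Prod>i<n. den i)"
  have denp: "den i > 0" for i unfolding den_def by (rule quotient_of_denom_pos')
  have "d > 0" unfolding d_def using denp by (simp add: prod_pos)
  define c where "c i = num i * (d div den i)" for i
  have "of_rat (q i) = (of_int (c i) / of_int d :: complex)" if "i < n" for i
  proof -
    have "den i dvd d" unfolding d_def using that by (intro dvd_prodI) auto
    then obtain e where e: "d = den i * e" by (auto elim: dvdE)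
    have "e \<noteq> 0" using e \<open>d > 0\<close> by auto
    have "q i = of_int (num i) / of_int (den i)" unfolding num_def den_def
      by (rule quotient_of_div) simp
    hence "(of_rat (q i) :: complex) = of_int (num i) / of_int (den i)"
      by (simp add: of_rat_divide)
    also have "\<dots> = of_int (c i) / of_int d"
      unfolding c_def e using denp[of i] \<open>e \<noteq> 0\<close> by (simp add: field_simps)
    finally show ?thesis .
  qed
  hence "(\<Sum>i<n. of_rat (q i) * \<alpha> ^ i) = (\<Sum>i<n. (of_int (c i) / of_int d) * \<alpha> ^ i)"
    by (intro sum.cong) auto
  thus ?thesis using \<open>d > 0\<close> by blast
qed

theorem corollary2p2:
  fixes n :: nat and m :: int and \<alpha> :: complex
  assumes "n \<ge> 2" and "squarefree m" and "m \<noteq> 1" and "m \<noteq> -1"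
    and "\<alpha> ^ n = of_int m"
  shows "\<forall>x \<in> rat_adjoin \<alpha>. algebraic_int x \<longrightarrow>
           (\<exists>d :: int. d > 0 \<and> gcd d m = 1 \<and>
              (\<exists>c :: nat \<Rightarrow> int. x = (\<Sum>i<n. (of_int (c i) / of_int d) * \<alpha> ^ i)))"
proof (intro ballI impI)
  fix x assume xin: "x \<in> rat_adjoin \<alpha>" and ai: "algebraic_int x"
  have n1: "n \<ge> 1" using assms(1) by simp
  define Q where "Q d \<longleftrightarrow> d > 0 \<and> (\<exists>c :: nat \<Rightarrow> int. x = (\<Sum>i<n. (of_int (c i) / of_int d) * \<alpha> ^ i))" for d :: int
  obtain q where xq: "x = (\<Sum>i<n. of_rat (q i) * \<alpha> ^ i)" using rep_rat[OF n1 assms(5) xin] by blast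
  obtain d c where dc: "d > 0" "(\<Sum>i<n. of_rat (q i) * \<alpha> ^ i) = (\<Sum>i<n. (of_int (c i) / of_int d) * \<alpha> ^ i)"
    using common_den[where q=q and n=n and \<alpha>=\<alpha>] by blast
  have "x = (\<Sum>i<n. (of_int (c i) / of_int d) * \<alpha> ^ i)" using xq dc(2) by (rule trans)
  hence "Q d" unfolding Q_def using dc(1) by (intro conjI exI[of _ c])
  hence "\<exists>d0. Q d0 \<and> (\<forall>y. Q y \<longrightarrow> nat d0 \<le> nat y)" by (rule ex_has_least_nat)
  then obtain d0 where d0: "Q d0" and min0: "\<forall>y. Q y \<longrightarrow> nat d0 \<le> nat y" by blast
  have min: "nat d0 \<le> nat y" if "Q y" for y using min0 that by blast
  from d0 obtain c0 where d0p: "d0 > 0" and c0: "x = (\<Sum>i<n. (of_int (c0 i) / of_int d0) * \<alpha> ^ i)"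
    unfolding Q_def by blast
  have "gcd d0 m = 1"
  proof (rule ccontr)
    assume ng: "gcd d0 m \<noteq> 1"
    have "gcd d0 m \<noteq> 0" using d0p by simp
    moreover have "\<not> is_unit (gcd d0 m)" using ng by simp
    ultimately obtain p where p: "p dvd gcd d0 m" "prime p" using prime_divisor_exists[of "gcd d0 m"] by blast
    hence pd: "p dvd d0" "p dvd m" using dvd_trans gcd_dvd1 gcd_dvd2 by blast+
    have all: "\<forall>i<n. p dvd c0 i"
      using reduce[OF n1 assms(2) assms(5) ai d0p c0 p(2) pd] .
    have p1: "p > 1" using p(2) by (rule prime_gt_1_int)
    obtain e where e: "d0 = p * e" using pd(1) by (rule dvdE)
    have ep: "e > 0" using zero_less_mult_pos[of p e] e d0p p1 by simp
    have "x = (\<Sum>i<n. (of_int (c0 i div p) / of_int e) * \<alpha> ^ i)"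
      unfolding c0
    proof (intro sum.cong refl)
      fix i assume "i \<in> {..<n}"
      hence "p dvd c0 i" using all by blast
      then obtain k where k: "c0 i = p * k" by (rule dvdE)
      show "(of_int (c0 i) / of_int d0) * \<alpha> ^ i = (of_int (c0 i div p) / of_int e) * \<alpha> ^ i"
      proof -
        have p0: "p \<noteq> 0" using p1 by simp
        have "(p * k) div p = k" using p0 by simp
        moreover have "(of_int (p * k) / of_int (p * e) :: complex) = of_int k / of_int e"
          using p0 by (simp only: of_int_mult mult_divide_mult_cancel_left of_int_eq_0_iff not_False_eq_True)
        ultimately have "(of_int (c0 i) / of_int d0 :: complex) = of_int (c0 i div p) / of_int e"
          by (simp only: k e)
        thus ?thesis by (simp only:)
      qed
    qed
    hence "Q e" unfolding Q_def using ep by (intro conjI exI[of _ "\<lambda>i. c0 i div p"])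
    hence le: "nat d0 \<le> nat e" by (rule min)
    have "1 * e < p * e" by (rule mult_strict_right_mono[OF p1 ep])
    hence "e < d0" by (simp only: e mult_1)
    thus False using le ep by linarith
  qed
  show "\<exists>d :: int. d > 0 \<and> gcd d m = 1 \<and>
              (\<exists>c :: nat \<Rightarrow> int. x = (\<Sum>i<n. (of_int (c i) / of_int d) * \<alpha> ^ i))"
    by (intro exI[of _ d0] conjI exI[of _ c0] d0p c0 \<open>gcd d0 m = 1\<close>)
qed
end
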